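(* Let $\mathbb{X}$ be a discrete group with identity $\circ$, let $\mu$ be a finitely supported probability measure on $\mathbb{X}$ satisfying (A1) $\mu(xzx^{-1})=\mu(z)$ for all $x,z\in\mathbb{X}$ and (A2) $\mu(z)=\mu(z^{-1})$ for all $z\in\mathbb{X}$, and let $(X_t)_{t\ge0}$ be the continuous-time Markov chain on $\mathbb{X}$ started at $X_0=\circ$ with generator $(Lf)(x)=\sum_{z\in\mathbb{X}}\mu(z)(f(xz)-f(x))$. Fix a function $f\colon\mathbb{X}\to\mathbb{R}$ and a time $t\ge 0$. If $\mathbb{E}[\Gamma f(X_t)]<\infty$, then $\mathbb{E}[f^2(X_t)]<\infty$ and $$\mathrm{Var}[f(X_t)]\le 2t\,\mathbb{E}[\Gamma f(X_t)].$$
   Context: Here $\Gamma f(x):=\frac12\sum_{z\in\mathbb{X}}\mu(z)\left(f(xz)-f(x)\right)^2$ (the carré du champ $\Gamma(f)=\frac12[L(f^2)-2fLf]$ of $L$, extended to arbitrary, possibly unbounded, $f$ by this formula). *)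

theory Defs
  imports "HOL-Analysis.Analysis" "HOL-Probability.Probability_Mass_Function"
begin

text \<open>The group is written additively (type class group_add, not necessarily
commutative): the product xz is x + z, the identity is 0, the inverse of z is - z.\<close>

primrec conv_pow :: "'a::group_add pmf \<Rightarrow> nat \<Rightarrow> 'a pmf" where
  "conv_pow \<mu> 0 = return_pmf 0"
| "conv_pow \<mu> (Suc n) = map_pmf (\<lambda>(x, z). x + z) (pair_pmf (conv_pow \<mu> n) \<mu>)"

text \<open>Law of X_t for the continuous-time Markov chain started at the identity with
generator (L f)(x) = sum_z mu(z) (f(x z) - f(x)): since mu is a probability
measure, the chain jumps at the times of a rate-1 Poisson process, each jump
right-multiplying by an independent mu-distributed step.\<close>
definition chain_law :: "'a::group_add pmf \<Rightarrow> real \<Rightarrow> 'a \<Rightarrow> real" where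
  "chain_law \<mu> t x = (\<Sum>n. exp (- t) * t ^ n / fact n * pmf (conv_pow \<mu> n) x)"

definition chain_expect :: "'a::group_add pmf \<Rightarrow> real \<Rightarrow> ('a \<Rightarrow> real) \<Rightarrow> real" where
  "chain_expect \<mu> t g = (\<Sum>\<^sub>\<infinity>x. chain_law \<mu> t x * g x)"

definition chain_var :: "'a::group_add pmf \<Rightarrow> real \<Rightarrow> ('a \<Rightarrow> real) \<Rightarrow> real" where
  "chain_var \<mu> t f = chain_expect \<mu> t (\<lambda>x. (f x)\<^sup>2) - (chain_expect \<mu> t f)\<^sup>2"

definition carre_du_champ :: "'a::group_add pmf \<Rightarrow> ('a \<Rightarrow> real) \<Rightarrow> 'a \<Rightarrow> real" where
  "carre_du_champ \<mu> f x = 1/2 * (\<Sum>z\<in>set_pmf \<mu>. pmf \<mu> z * (f (x + z) - f x)\<^sup>2)"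

end

theory Submission
  imports Defs
begin


locale rw =
  fixes \<mu> :: "'a::group_add pmf"
  assumes fin: "finite (set_pmf \<mu>)"
    and A1: "\<And>x z. pmf \<mu> (x + z + - x) = pmf \<mu> z"
begin

definition P1 :: "('a \<Rightarrow> real) \<Rightarrow> 'a \<Rightarrow> real" where
  "P1 g y = (\<Sum>z\<in>set_pmf \<mu>. pmf \<mu> z * g (y + z))"

definition Pn :: "nat \<Rightarrow> ('a \<Rightarrow> real) \<Rightarrow> 'a \<Rightarrow> real" where
  "Pn n = P1 ^^ n"

lemma sum_mu: "(\<Sum>z\<in>set_pmf \<mu>. pmf \<mu> z) = 1"
  using sum_pmf_eq_1[OF fin] by auto

lemma P1_add: "P1 (\<lambda>x. g x + h x) = (\<lambda>y. P1 g y + P1 h y)"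
  by (rule ext) (simp add: P1_def sum.distrib algebra_simps)
lemma P1_diff: "P1 (\<lambda>x. g x - h x) = (\<lambda>y. P1 g y - P1 h y)"
  by (rule ext) (simp add: P1_def sum_subtractf algebra_simps)
lemma P1_cmult: "P1 (\<lambda>x. c * g x) = (\<lambda>y. c * P1 g y)"
  by (rule ext) (simp add: P1_def sum_distrib_left algebra_simps)
lemma P1_const: "P1 (\<lambda>x. c) = (\<lambda>y. c)"
  by (rule ext) (simp add: P1_def sum_distrib_right[symmetric] sum_mu)
lemma P1_mono: "(\<And>x. g x \<le> h x) \<Longrightarrow> P1 g y \<le> P1 h y"
  unfolding P1_def by (intro sum_mono mult_left_mono) auto
lemma P1_sum: "P1 (\<lambda>x. \<Sum>i\<in>I. g i x) = (\<lambda>y. \<Sum>i\<in>I. P1 (g i) y)"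
  by (rule ext) (simp add: P1_def sum_distrib_left sum.swap[of _ "set_pmf \<mu>"])

lemma P1_sq_dev: "P1 (\<lambda>x. (g x - c)\<^sup>2) y = P1 (\<lambda>x. (g x)\<^sup>2) y - 2 * c * P1 g y + c\<^sup>2"
proof -
  have "P1 (\<lambda>x. (g x - c)\<^sup>2) y = (\<Sum>z\<in>set_pmf \<mu>. pmf \<mu> z * (g (y+z))\<^sup>2 - 2*c*(pmf \<mu> z * g (y+z)) + c\<^sup>2 * pmf \<mu> z)"
    unfolding P1_def by (intro sum.cong) (auto simp: power2_eq_square algebra_simps)
  also have "\<dots> = P1 (\<lambda>x. (g x)\<^sup>2) y - 2 * c * P1 g y + c\<^sup>2 * (\<Sum>z\<in>set_pmf \<mu>. pmf \<mu> z)"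
    unfolding P1_def by (simp add: sum.distrib sum_subtractf flip: sum_distrib_left)
  finally show ?thesis by (simp add: sum_mu)
qed

lemma P1_nonneg: "(\<And>x. g x \<ge> 0) \<Longrightarrow> P1 g y \<ge> 0"
  using P1_mono[of "\<lambda>x. 0" g y] by (simp add: P1_const)

lemma P1_jensen: "(P1 g y)\<^sup>2 \<le> P1 (\<lambda>x. (g x)\<^sup>2) y"
  using P1_nonneg[of "\<lambda>x. (g x - P1 g y)\<^sup>2" y] P1_sq_dev[of g "P1 g y" y]
  by (simp add: power2_eq_square)

lemma Pn_0[simp]: "Pn 0 g = g" by (simp add: Pn_def)
lemma Pn_Suc: "Pn (Suc n) g = Pn n (P1 g)" by (simp add: Pn_def funpow_swap1)
lemma Pn_Suc': "Pn (Suc n) g = P1 (Pn n g)" unfolding Pn_def by (simp only: funpow.simps o_apply)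
lemma Pn_plus: "Pn (m + n) g = Pn m (Pn n g)" by (simp add: Pn_def funpow_add)

lemma Pn_add: "Pn n (\<lambda>x. g x + h x) = (\<lambda>y. Pn n g y + Pn n h y)"
  by (induction n arbitrary: g h) (simp_all add: Pn_Suc P1_add)
lemma Pn_diff: "Pn n (\<lambda>x. g x - h x) = (\<lambda>y. Pn n g y - Pn n h y)"
  by (induction n arbitrary: g h) (simp_all add: Pn_Suc P1_diff)
lemma Pn_cmult: "Pn n (\<lambda>x. c * g x) = (\<lambda>y. c * Pn n g y)"
  by (induction n arbitrary: g) (simp_all add: Pn_Suc P1_cmult)
lemma Pn_const: "Pn n (\<lambda>x. c) = (\<lambda>y. c)"
  by (induction n) (simp_all add: Pn_Suc P1_const)
lemma Pn_sum: "Pn n (\<lambda>x. \<Sum>i\<in>I. g i x) = (\<lambda>y. \<Sum>i\<in>I. Pn n (g i) y)"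
  by (induction n arbitrary: g) (simp_all add: Pn_Suc P1_sum)
lemma Pn_mono: "(\<And>x. g x \<le> h x) \<Longrightarrow> Pn n g y \<le> Pn n h y"
proof (induction n arbitrary: g h y)
  case 0 then show ?case by simp
next
  case (Suc n) then show ?case by (simp add: Pn_Suc P1_mono)
qed
lemma Pn_jensen: "(Pn n g y)\<^sup>2 \<le> Pn n (\<lambda>x. (g x)\<^sup>2) y"
proof (induction n arbitrary: g y)
  case 0 then show ?case by simp
next
  case (Suc n)
  have "(Pn (Suc n) g y)\<^sup>2 = (Pn n (P1 g) y)\<^sup>2" by (simp add: Pn_Suc)
  also have "\<dots> \<le> Pn n (\<lambda>x. (P1 g x)\<^sup>2) y" by (rule Suc.IH)
  also have "\<dots> \<le> Pn n (P1 (\<lambda>x. (g x)\<^sup>2)) y" by (rule Pn_mono) (rule P1_jensen)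
  finally show ?case by (simp add: Pn_Suc)
qed

lemma A1': "pmf \<mu> (x + z - x) = pmf \<mu> z"
  using A1[of x z] by simp

lemma P1_shift: "P1 g (x + z) = P1 (\<lambda>y. g (y + z)) x"
  unfolding P1_def
proof (rule sum.reindex_bij_witness[where j = "\<lambda>w. z + w - z" and i = "\<lambda>v. - z + v + z"])
  fix a assume "a \<in> set_pmf \<mu>"
  show "- z + (z + a - z) + z = a" by (simp add: add.assoc)
  show "z + a - z \<in> set_pmf \<mu>" using \<open>a \<in> set_pmf \<mu>\<close> A1'[of z a] by (simp add: set_pmf_iff)
  show "pmf \<mu> (z + a - z) * g (x + (z + a - z) + z) = pmf \<mu> a * g (x + z + a)"
    using A1'[of z a] by (simp add: add.assoc)
next
  fix b assume "b \<in> set_pmf \<mu>"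
  show "z + (- z + b + z) - z = b" by (simp add: add.assoc)
  show "- z + b + z \<in> set_pmf \<mu>" using \<open>b \<in> set_pmf \<mu>\<close> A1'[of "-z" b] by (simp add: set_pmf_iff)
qed

lemma Pn_shift: "Pn n g (x + z) = Pn n (\<lambda>y. g (y + z)) x"
proof (induction n arbitrary: g x)
  case 0 then show ?case by simp
next
  case (Suc n)
  have "Pn (Suc n) g (x + z) = Pn n (\<lambda>y. P1 g (y + z)) x" by (simp add: Pn_Suc Suc.IH)
  also have "(\<lambda>y. P1 g (y + z)) = P1 (\<lambda>y. g (y + z))" by (rule ext) (rule P1_shift)
  finally show ?case by (simp add: Pn_Suc)
qed

lemma Gam_nonneg: "carre_du_champ \<mu> g x \<ge> 0"
  unfolding carre_du_champ_def by (intro mult_nonneg_nonneg sum_nonneg) auto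

lemma Gam_Pn: "carre_du_champ \<mu> (Pn k g) x \<le> Pn k (carre_du_champ \<mu> g) x"
proof -
  have "carre_du_champ \<mu> (Pn k g) x
      = 1/2 * (\<Sum>z\<in>set_pmf \<mu>. pmf \<mu> z * (Pn k (\<lambda>y. g (y + z) - g y) x)\<^sup>2)"
    unfolding carre_du_champ_def by (simp add: Pn_shift Pn_diff)
  also have "\<dots> \<le> 1/2 * (\<Sum>z\<in>set_pmf \<mu>. pmf \<mu> z * Pn k (\<lambda>y. (g (y + z) - g y)\<^sup>2) x)"
    by (intro mult_left_mono sum_mono Pn_jensen) auto
  also have "\<dots> = 1/2 * Pn k (\<lambda>y. \<Sum>z\<in>set_pmf \<mu>. pmf \<mu> z * (g (y + z) - g y)\<^sup>2) x"
    by (simp only: Pn_sum Pn_cmult)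
  also have "\<dots> = Pn k (carre_du_champ \<mu> g) x"
    unfolding carre_du_champ_def by (simp only: Pn_cmult)
  finally show ?thesis .
qed

end

context rw
begin

lemma var_one_step:
  "P1 (\<lambda>x. (g x)\<^sup>2) y - (P1 g y)\<^sup>2 = 2 * carre_du_champ \<mu> g y - (P1 g y - g y)\<^sup>2"
proof -
  have h1: "2 * carre_du_champ \<mu> g y = P1 (\<lambda>x. (g x - g y)\<^sup>2) y"
    unfolding carre_du_champ_def P1_def by simp
  have h2: "P1 (\<lambda>x. (g x - g y)\<^sup>2) y = P1 (\<lambda>x. (g x)\<^sup>2) y - 2 * g y * P1 g y + (g y)\<^sup>2"
    by (rule P1_sq_dev)
  have E: "2 * carre_du_champ \<mu> g y = P1 (\<lambda>x. (g x)\<^sup>2) y - 2 * g y * P1 g y + (g y)\<^sup>2"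
    using h1 h2 by linarith
  show ?thesis unfolding power2_diff[of "P1 g y" "g y"] E by (simp add: algebra_simps)
qed

lemma step1:
  "Pn (Suc n) (\<lambda>x. (f x)\<^sup>2) 0 + real (Suc n) * (Pn (Suc n) f 0 - Pn n f 0)\<^sup>2
     \<le> (Pn (Suc n) f 0)\<^sup>2 + 2 * real (Suc n) * Pn n (carre_du_champ \<mu> f) 0"
proof -
  define a where "a k = Pn k (\<lambda>x. (Pn (Suc n - k) f x)\<^sup>2) 0" for k
  define C where "C = 2 * Pn n (carre_du_champ \<mu> f) 0 - (Pn (Suc n) f 0 - Pn n f 0)\<^sup>2"
  have tele: "(\<Sum>k<Suc n. a (Suc k) - a k) = a (Suc n) - a 0"
    by (rule sum_lessThan_telescope)
  have tm: "a (Suc k) - a k \<le> C" if "k < Suc n" for k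
  proof -
    define m where "m = n - k"
    have nk: "n = k + m" "Suc n - k = Suc m" "Suc n - Suc k = m" using that by (auto simp: m_def)
    define g where "g = Pn m f"
    have e1: "a (Suc k) = Pn k (P1 (\<lambda>x. (g x)\<^sup>2)) 0"
      unfolding a_def g_def using nk by (simp add: Pn_Suc)
    have e2: "a k = Pn k (\<lambda>x. (P1 g x)\<^sup>2) 0"
      unfolding a_def g_def using nk by (simp add: Pn_Suc')
    have "a (Suc k) - a k = Pn k (\<lambda>x. P1 (\<lambda>x. (g x)\<^sup>2) x - (P1 g x)\<^sup>2) 0"
      unfolding e1 e2 by (simp add: Pn_diff)
    also have "\<dots> = Pn k (\<lambda>x. 2 * carre_du_champ \<mu> g x - (P1 g x - g x)\<^sup>2) 0"
      by (simp add: var_one_step)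
    also have "\<dots> = 2 * Pn k (carre_du_champ \<mu> g) 0 - Pn k (\<lambda>x. (P1 g x - g x)\<^sup>2) 0"
      by (simp add: Pn_diff Pn_cmult)
    also have "\<dots> \<le> 2 * Pn n (carre_du_champ \<mu> f) 0 - (Pn k (\<lambda>x. P1 g x - g x) 0)\<^sup>2"
    proof -
      have "Pn k (carre_du_champ \<mu> g) 0 \<le> Pn k (Pn m (carre_du_champ \<mu> f)) 0"
        unfolding g_def by (intro Pn_mono Gam_Pn)
      also have "\<dots> = Pn n (carre_du_champ \<mu> f) 0" by (simp add: nk Pn_plus)
      finally show ?thesis using Pn_jensen[of k "\<lambda>x. P1 g x - g x" 0] by linarith
    qed
    also have "Pn k (\<lambda>x. P1 g x - g x) 0 = Pn (Suc n) f 0 - Pn n f 0"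
      unfolding g_def by (simp add: Pn_diff nk flip: Pn_Suc' Pn_plus)
    finally show ?thesis unfolding C_def .
  qed
  have "a (Suc n) - a 0 \<le> real (Suc n) * C"
    using sum_mono[of "{..<Suc n}" "\<lambda>k. a (Suc k) - a k" "\<lambda>k. C"] tm tele by simp
  moreover have "a (Suc n) = Pn (Suc n) (\<lambda>x. (f x)\<^sup>2) 0" by (simp add: a_def)
  moreover have "a 0 = (Pn (Suc n) f 0)\<^sup>2" by (simp add: a_def)
  ultimately show ?thesis unfolding C_def by (simp add: algebra_simps)
qed

lemma fin_Q: "finite (set_pmf (conv_pow \<mu> n))"
  by (induction n) (auto simp: fin)

lemma sum_integral: "finite (set_pmf M) \<Longrightarrow>
   (\<Sum>x\<in>set_pmf M. pmf M x * g x) = measure_pmf.expectation M (g :: _ \<Rightarrow> real)"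
  by (subst integral_measure_pmf[of "set_pmf M"]) auto

lemma Q_sum: "(\<Sum>x\<in>set_pmf (conv_pow \<mu> n). pmf (conv_pow \<mu> n) x * g x) = Pn n g 0"
proof (induction n arbitrary: g)
  case 0 then show ?case by simp
next
  case (Suc n)
  let ?Q = "conv_pow \<mu> n"
  have "(\<Sum>x\<in>set_pmf (conv_pow \<mu> (Suc n)). pmf (conv_pow \<mu> (Suc n)) x * g x)
      = measure_pmf.expectation (conv_pow \<mu> (Suc n)) g"
    by (rule sum_integral[OF fin_Q])
  also have "\<dots> = measure_pmf.expectation (pair_pmf ?Q \<mu>) (\<lambda>p. g (fst p + snd p))"
    unfolding conv_pow.simps integral_map_pmf by (simp add: case_prod_beta)
  also have "\<dots> = (\<Sum>p\<in>set_pmf ?Q \<times> set_pmf \<mu>. pmf (pair_pmf ?Q \<mu>) p * g (fst p + snd p))"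
    by (subst integral_measure_pmf[of "set_pmf ?Q \<times> set_pmf \<mu>"]) (auto simp: fin fin_Q)
  also have "\<dots> = (\<Sum>x\<in>set_pmf ?Q. \<Sum>z\<in>set_pmf \<mu>. pmf ?Q x * (pmf \<mu> z * g (x + z)))"
    by (subst sum.cartesian_product) (auto intro!: sum.cong simp: pmf_pair)
  also have "\<dots> = (\<Sum>x\<in>set_pmf ?Q. pmf ?Q x * P1 g x)"
    by (simp add: P1_def sum_distrib_left)
  also have "\<dots> = Pn (Suc n) g 0" by (simp add: Suc.IH Pn_Suc)
  finally show ?case .
qed

end


definition pois :: "real \<Rightarrow> nat \<Rightarrow> real" where
  "pois t n = exp (- t) * t ^ n / fact n"

lemma pois_nonneg: "t \<ge> 0 \<Longrightarrow> pois t n \<ge> 0"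
  unfolding pois_def by simp

lemma pois_0_pos: "pois t 0 > 0"
  unfolding pois_def by simp

lemma pois_sums: "pois t sums 1"
proof -
  have "(\<lambda>n. exp (- t) * (t ^ n /\<^sub>R fact n)) sums (exp (- t) * exp t)"
    by (intro sums_mult exp_converges)
  moreover have "(\<lambda>n. exp (- t) * (t ^ n /\<^sub>R fact n)) = pois t"
    by (rule ext) (simp add: pois_def divide_inverse_commute)
  ultimately show ?thesis by (simp add: exp_minus field_simps)
qed

lemma pois_summable: "summable (pois t)"
  using pois_sums by (rule sums_summable)

lemma pois_Suc: "real (Suc n) * pois t (Suc n) = t * pois t n"
proof -
  have f: "fact (Suc n) = real (Suc n) * fact n" by simp
  have "real (Suc n) * pois t (Suc n) = exp (- t) * (t * t ^ n) * (real (Suc n) / (real (Suc n) * fact n))"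
    unfolding pois_def f by simp
  also have "real (Suc n) / (real (Suc n) * fact n) = 1 / fact n"
    by (simp del: of_nat_Suc)
  finally show ?thesis unfolding pois_def by simp
qed

lemma pois_sum_le1: "t \<ge> 0 \<Longrightarrow> finite A \<Longrightarrow> sum (pois t) A \<le> 1"
  using sum_le_suminf[OF pois_summable, of A t] pois_nonneg[of t] sums_unique[OF pois_sums, of t]
  by auto

lemma pois_U: "(\<Sum>a\<le>k. real a * pois t a) = t * (\<Sum>a\<le>k. pois t a) - t * pois t k"
proof (induction k)
  case 0 then show ?case by simp
next
  case (Suc k)
  have "(\<Sum>a\<le>Suc k. real a * pois t a) = t * (\<Sum>a\<le>k. pois t a) - t * pois t k + t * pois t k"
    using Suc pois_Suc[of k t] by simp
  then show ?case by (simp add: algebra_simps)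
qed

lemma pois_K:
  assumes "k \<le> M"
  shows "(\<Sum>a\<le>k. \<Sum>b\<le>M. if k < b then pois t a * pois t b * (real b - real a) else 0)
       = t * (pois t k * (\<Sum>a\<le>M. pois t a) - (\<Sum>a\<le>k. pois t a) * pois t M)"
  using assms
proof (induction M rule: dec_induct)
  case base
  then show ?case by (simp add: algebra_simps)
next
  case (step M)
  let ?F = "\<Sum>a\<le>k. pois t a"
  have "(\<Sum>a\<le>k. \<Sum>b\<le>Suc M. if k < b then pois t a * pois t b * (real b - real a) else 0)
      = (\<Sum>a\<le>k. \<Sum>b\<le>M. if k < b then pois t a * pois t b * (real b - real a) else 0)
        + (\<Sum>a\<le>k. pois t a * pois t (Suc M) * (real (Suc M) - real a))"
    using step.hyps by (simp add: sum.distrib)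
  also have "(\<Sum>a\<le>k. pois t a * pois t (Suc M) * (real (Suc M) - real a))
      = (real (Suc M) * pois t (Suc M)) * ?F - pois t (Suc M) * (\<Sum>a\<le>k. real a * pois t a)"
    by (simp add: sum_distrib_left sum_subtractf sum.distrib algebra_simps)
  also have "\<dots> = t * pois t M * ?F - pois t (Suc M) * (t * ?F - t * pois t k)"
    by (simp only: pois_Suc pois_U)
  finally show ?case using step.IH by (simp add: algebra_simps)
qed

lemma pois_K_le:
  assumes "k \<le> M" "t \<ge> 0"
  shows "(\<Sum>a\<le>k. \<Sum>b\<le>M. if k < b then pois t a * pois t b * (real b - real a) else 0) \<le> t * pois t k"
proof -
  have "pois t k * (\<Sum>a\<le>M. pois t a) \<le> pois t k * 1"
    by (rule mult_left_mono) (use pois_sum_le1[of t "{..M}"] assms(2) pois_nonneg[of t k] in auto)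
  moreover have "0 \<le> (\<Sum>a\<le>k. pois t a) * pois t M"
    using assms(2) by (simp add: pois_nonneg sum_nonneg)
  ultimately have "pois t k * (\<Sum>a\<le>M. pois t a) - (\<Sum>a\<le>k. pois t a) * pois t M \<le> pois t k * 1"
    by linarith
  then show ?thesis using pois_K[OF assms(1)] assms(2) by (simp add: mult_left_mono)
qed


lemma sq_diff_le:
  fixes h :: "nat \<Rightarrow> real"
  assumes "a \<le> M" "b \<le> M"
  shows "(h b - h a)\<^sup>2 \<le> \<bar>real b - real a\<bar> *
          (\<Sum>k<M. of_bool (min a b \<le> k \<and> k < max a b) * (h (Suc k) - h k)\<^sup>2)"
proof -
  define lo where "lo = min a b"
  define hi where "hi = max a b"
  have hl: "lo \<le> hi" "hi \<le> M" using assms by (auto simp: lo_def hi_def)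
  have sq: "(h b - h a)\<^sup>2 = (h hi - h lo)\<^sup>2"
    by (cases "a \<le> b") (auto simp: lo_def hi_def power2_commute)
  have "h hi - h lo = (\<Sum>k\<in>{lo..<hi}. h (Suc k) - h k)"
    by (rule sum_Suc_diff'[symmetric]) (fact hl)
  then have "(h hi - h lo)\<^sup>2 \<le> (\<Sum>k\<in>{lo..<hi}. (h (Suc k) - h k)\<^sup>2) * card {lo..<hi}"
    using sum_squared_le_sum_of_squares[of "\<lambda>k. h (Suc k) - h k" "{lo..<hi}"] by simp
  moreover have "real (card {lo..<hi}) = \<bar>real b - real a\<bar>"
    by (auto simp: lo_def hi_def of_nat_diff)
  moreover have "(\<Sum>k<M. of_bool (min a b \<le> k \<and> k < max a b) * (h (Suc k) - h k)\<^sup>2)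
      = (\<Sum>k\<in>{lo..<hi}. (h (Suc k) - h k)\<^sup>2)"
  proof -
    have "(\<Sum>k<M. of_bool (min a b \<le> k \<and> k < max a b) * (h (Suc k) - h k)\<^sup>2)
        = (\<Sum>k\<in>{..<M}. if k \<in> {lo..<hi} then (h (Suc k) - h k)\<^sup>2 else 0)"
      by (intro sum.cong) (auto simp: lo_def hi_def)
    also have "\<dots> = (\<Sum>k\<in>{..<M} \<inter> {lo..<hi}. (h (Suc k) - h k)\<^sup>2)"
      by (rule sum.inter_restrict[symmetric]) simp
    also have "{..<M} \<inter> {lo..<hi} = {lo..<hi}" using hl by auto
    finally show ?thesis .
  qed
  ultimately show ?thesis unfolding sq by (simp add: mult.commute)
qed

lemma swap3: "(\<Sum>a\<in>A. \<Sum>b\<in>B. \<Sum>k\<in>C. X a b k) = (\<Sum>k\<in>C. \<Sum>a\<in>A. \<Sum>b\<in>B. X a b k)"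
proof -
  have "(\<Sum>a\<in>A. \<Sum>b\<in>B. \<Sum>k\<in>C. X a b k) = (\<Sum>a\<in>A. \<Sum>k\<in>C. \<Sum>b\<in>B. X a b k)"
    by (rule sum.cong[OF refl], rule sum.swap)
  also have "\<dots> = (\<Sum>k\<in>C. \<Sum>a\<in>A. \<Sum>b\<in>B. X a b k)" by (rule sum.swap)
  finally show ?thesis .
qed

lemma W_le:
  assumes "k < M" "t \<ge> 0"
  shows "(\<Sum>a\<le>M. \<Sum>b\<le>M. pois t a * pois t b * \<bar>real b - real a\<bar> *
            of_bool (min a b \<le> k \<and> k < max a b)) \<le> 2 * t * pois t k"
proof -
  define Y where "Y a b = (if a \<le> k \<and> k < b then pois t a * pois t b * (real b - real a) else 0)" for a b
  have pt: "pois t a * pois t b * \<bar>real b - real a\<bar> * of_bool (min a b \<le> k \<and> k < max a b)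
      = Y a b + Y b a" for a b
    by (cases a b rule: linorder_cases) (auto simp: Y_def min_def max_def)
  have "(\<Sum>a\<le>M. \<Sum>b\<le>M. pois t a * pois t b * \<bar>real b - real a\<bar> *
            of_bool (min a b \<le> k \<and> k < max a b))
      = (\<Sum>a\<le>M. \<Sum>b\<le>M. Y a b) + (\<Sum>a\<le>M. \<Sum>b\<le>M. Y b a)"
    by (simp add: pt sum.distrib)
  also have "(\<Sum>a\<le>M. \<Sum>b\<le>M. Y b a) = (\<Sum>a\<le>M. \<Sum>b\<le>M. Y a b)"
    by (rule sum.swap)
  also have "(\<Sum>a\<le>M. \<Sum>b\<le>M. Y a b)
      = (\<Sum>a\<le>k. \<Sum>b\<le>M. if k < b then pois t a * pois t b * (real b - real a) else 0)"
  proof -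
    have "(\<Sum>a\<le>M. \<Sum>b\<le>M. Y a b) = (\<Sum>a\<le>k. \<Sum>b\<le>M. Y a b)"
      by (rule sum.mono_neutral_right) (use assms in \<open>auto simp: Y_def\<close>)
    also have "\<dots> = (\<Sum>a\<le>k. \<Sum>b\<le>M. if k < b then pois t a * pois t b * (real b - real a) else 0)"
      by (intro sum.cong refl) (auto simp: Y_def)
    finally show ?thesis .
  qed
  also have "\<dots> \<le> t * pois t k" using pois_K_le[of k M t] assms by simp
  finally show ?thesis by simp
qed

lemma fin_poinc:
  fixes h :: "nat \<Rightarrow> real"
  assumes t: "t \<ge> 0"
  shows "(\<Sum>a\<le>M. \<Sum>b\<le>M. pois t a * pois t b * (h b - h a)\<^sup>2)
           \<le> 2 * t * (\<Sum>k<M. pois t k * (h (Suc k) - h k)\<^sup>2)"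
proof -
  define D where "D k = (h (Suc k) - h k)\<^sup>2" for k
  define J where "J a b k = (of_bool (min a b \<le> k \<and> k < max a b) :: real)" for a b k :: nat
  define W where "W k = (\<Sum>a\<le>M. \<Sum>b\<le>M. pois t a * pois t b * \<bar>real b - real a\<bar> * J a b k)" for k
  have "(\<Sum>a\<le>M. \<Sum>b\<le>M. pois t a * pois t b * (h b - h a)\<^sup>2)
      \<le> (\<Sum>a\<le>M. \<Sum>b\<le>M. pois t a * pois t b * (\<bar>real b - real a\<bar> * (\<Sum>k<M. J a b k * D k)))"
    unfolding J_def D_def
    by (intro sum_mono mult_left_mono sq_diff_le) (auto simp: pois_nonneg t)
  also have "\<dots> = (\<Sum>a\<le>M. \<Sum>b\<le>M. \<Sum>k<M. D k * (pois t a * pois t b * \<bar>real b - real a\<bar> * J a b k))"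
    by (simp add: sum_distrib_left mult_ac)
  also have "\<dots> = (\<Sum>k<M. \<Sum>a\<le>M. \<Sum>b\<le>M. D k * (pois t a * pois t b * \<bar>real b - real a\<bar> * J a b k))"
    by (rule swap3)
  also have "\<dots> = (\<Sum>k<M. D k * W k)"
    by (simp add: W_def sum_distrib_left)
  also have "\<dots> \<le> (\<Sum>k<M. D k * (2 * t * pois t k))"
    unfolding W_def J_def
    by (intro sum_mono mult_left_mono W_le) (auto simp: D_def t)
  also have "\<dots> = 2 * t * (\<Sum>k<M. pois t k * (h (Suc k) - h k)\<^sup>2)"
    by (simp add: D_def sum_distrib_left mult_ac)
  finally show ?thesis .
qed



lemma poincare:
  fixes h :: "nat \<Rightarrow> real"
  assumes t: "t \<ge> 0" and sd: "summable (\<lambda>k. pois t k * (h (Suc k) - h k)\<^sup>2)"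
  shows "summable (\<lambda>k. pois t k * (h k)\<^sup>2)" "summable (\<lambda>k. pois t k * h k)"
    "(\<Sum>k. pois t k * (h k)\<^sup>2) - (\<Sum>k. pois t k * h k)\<^sup>2
       \<le> t * (\<Sum>k. pois t k * (h (Suc k) - h k)\<^sup>2)"
proof -
  define D where "D = (\<Sum>k. pois t k * (h (Suc k) - h k)\<^sup>2)"
  define V where "V M = (\<Sum>a\<le>M. \<Sum>b\<le>M. pois t a * pois t b * (h b - h a)\<^sup>2)" for M
  have pn: "\<And>k. pois t k \<ge> 0" using t by (rule pois_nonneg)
  have Dle: "(\<Sum>k<M. pois t k * (h (Suc k) - h k)\<^sup>2) \<le> D" for M
    unfolding D_def by (rule sum_le_suminf[OF sd]) (auto simp: pn)
  have VM: "V M \<le> 2 * t * D" for M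
  proof -
    have "2 * t * (\<Sum>k<M. pois t k * (h (Suc k) - h k)\<^sup>2) \<le> 2 * t * D"
      by (rule mult_left_mono[OF Dle]) (use t in simp)
    then show ?thesis using fin_poinc[OF t, where M=M and h=h] unfolding V_def by linarith
  qed
  have row: "pois t 0 * (\<Sum>b\<le>M. pois t b * (h b - h 0)\<^sup>2) \<le> V M" for M
  proof -
    have "pois t 0 * (\<Sum>b\<le>M. pois t b * (h b - h 0)\<^sup>2) = (\<lambda>a. \<Sum>b\<le>M. pois t a * pois t b * (h b - h a)\<^sup>2) 0"
      by (simp add: sum_distrib_left mult.assoc)
    also have "\<dots> \<le> V M" unfolding V_def
      by (rule member_le_sum) (auto intro!: sum_nonneg simp: pn)
    finally show ?thesis .
  qed
  have s0: "summable (\<lambda>b. pois t b * (h b - h 0)\<^sup>2)"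
  proof (rule summableI_nonneg_bounded)
    show "0 \<le> pois t n * (h n - h 0)\<^sup>2" for n by (simp add: pn)
    show "(\<Sum>i<n. pois t i * (h i - h 0)\<^sup>2) \<le> 2 * t * D / pois t 0" for n
    proof -
      have "(\<Sum>i<n. pois t i * (h i - h 0)\<^sup>2) \<le> (\<Sum>i\<le>n. pois t i * (h i - h 0)\<^sup>2)"
        by (rule sum_mono2) (auto simp: pn)
      also have "\<dots> \<le> 2 * t * D / pois t 0"
        using row[of n] VM[of n] pois_0_pos[of t] by (simp add: field_simps)
      finally show ?thesis .
    qed
  qed
  show s2: "summable (\<lambda>k. pois t k * (h k)\<^sup>2)"
  proof (rule summable_comparison_test'[where N=0])
    show "summable (\<lambda>k. 2 * (pois t k * (h k - h 0)\<^sup>2) + (2 * (h 0)\<^sup>2) * pois t k)"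
      by (intro summable_add summable_mult s0 summable_mult pois_summable)
    show "norm (pois t n * (h n)\<^sup>2) \<le> 2 * (pois t n * (h n - h 0)\<^sup>2) + (2 * (h 0)\<^sup>2) * pois t n" for n
    proof -
      have e: "2 * (h n - h 0)\<^sup>2 + 2 * (h 0)\<^sup>2 - (h n)\<^sup>2 = (h n - 2 * h 0)\<^sup>2"
        by (simp add: power2_eq_square algebra_simps)
      have "(h n)\<^sup>2 \<le> 2 * (h n - h 0)\<^sup>2 + 2 * (h 0)\<^sup>2"
        using e zero_le_power2[of "h n - 2 * h 0"] by linarith
      then have "pois t n * (h n)\<^sup>2 \<le> pois t n * (2 * (h n - h 0)\<^sup>2 + 2 * (h 0)\<^sup>2)"
        by (rule mult_left_mono) (simp add: pn)
      then show ?thesis using pn[of n] by (simp add: algebra_simps)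
    qed
  qed
  have absle: "\<bar>x\<bar> \<le> 1 + x\<^sup>2" for x :: real
  proof (cases "\<bar>x\<bar> \<le> 1")
    case True then show ?thesis by (simp add: add_increasing2)
  next
    case False
    then have "\<bar>x\<bar> * 1 \<le> \<bar>x\<bar> * \<bar>x\<bar>" by (intro mult_left_mono) auto
    then show ?thesis by (simp add: power2_eq_square abs_mult_self_eq)
  qed
  show s1: "summable (\<lambda>k. pois t k * h k)"
  proof (rule summable_comparison_test'[where N=0])
    show "summable (\<lambda>k. pois t k + pois t k * (h k)\<^sup>2)"
      by (intro summable_add pois_summable s2)
    show "norm (pois t n * h n) \<le> pois t n + pois t n * (h n)\<^sup>2" for n
      using mult_left_mono[OF absle[of "h n"] pn[of n]] pn[of n]
      by (simp add: abs_mult algebra_simps)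
  qed
  define F where "F M = (\<Sum>a\<le>M. pois t a)" for M
  define A where "A M = (\<Sum>a\<le>M. pois t a * (h a)\<^sup>2)" for M
  define B where "B M = (\<Sum>a\<le>M. pois t a * h a)" for M
  have Veq: "V M = 2 * (F M * A M - (B M)\<^sup>2)" for M
  proof -
    have "V M = (\<Sum>a\<le>M. \<Sum>b\<le>M. pois t a * (pois t b * (h b)\<^sup>2) + (pois t a * (h a)\<^sup>2) * pois t b
                 - 2 * ((pois t a * h a) * (pois t b * h b)))"
      unfolding V_def by (intro sum.cong refl) (simp add: power2_eq_square algebra_simps)
    also have "\<dots> = (\<Sum>a\<le>M. \<Sum>b\<le>M. pois t a * (pois t b * (h b)\<^sup>2))
        + (\<Sum>a\<le>M. \<Sum>b\<le>M. (pois t a * (h a)\<^sup>2) * pois t b)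
        - 2 * (\<Sum>a\<le>M. \<Sum>b\<le>M. (pois t a * h a) * (pois t b * h b))"
      by (simp add: sum.distrib sum_subtractf sum_distrib_left)
    also have "\<dots> = F M * A M + A M * F M - 2 * (B M * B M)"
      unfolding F_def A_def B_def sum_product ..
    finally show ?thesis by (simp add: power2_eq_square algebra_simps)
  qed
  have lF: "F \<longlonglongrightarrow> 1"
    unfolding F_def using summable_LIMSEQ'[OF pois_summable, of t] sums_unique[OF pois_sums, of t] by simp
  have lA: "A \<longlonglongrightarrow> (\<Sum>k. pois t k * (h k)\<^sup>2)"
    unfolding A_def by (rule summable_LIMSEQ'[OF s2])
  have lB: "B \<longlonglongrightarrow> (\<Sum>k. pois t k * h k)"
    unfolding B_def by (rule summable_LIMSEQ'[OF s1])
  have lim: "(\<lambda>M. F M * A M - (B M)\<^sup>2) \<longlonglongrightarrow> 1 * (\<Sum>k. pois t k * (h k)\<^sup>2) - (\<Sum>k. pois t k * h k)\<^sup>2"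
    by (intro tendsto_intros lF lA lB)
  have "F M * A M - (B M)\<^sup>2 \<le> t * D" for M using VM[of M] Veq[of M] by simp
  then have "1 * (\<Sum>k. pois t k * (h k)\<^sup>2) - (\<Sum>k. pois t k * h k)\<^sup>2 \<le> t * D"
    by (intro LIMSEQ_le_const2[OF lim]) auto
  then show "(\<Sum>k. pois t k * (h k)\<^sup>2) - (\<Sum>k. pois t k * h k)\<^sup>2
       \<le> t * (\<Sum>k. pois t k * (h (Suc k) - h k)\<^sup>2)" by (simp add: D_def)
qed



lemma swap_has_sum:
  fixes F :: "'x \<times> 'y \<Rightarrow> real"
  assumes Fs: "F summable_on UNIV"
    and ha: "\<And>x. ((\<lambda>y. F (x, y)) has_sum a x) UNIV"
    and hb: "\<And>y. ((\<lambda>x. F (x, y)) has_sum b y) UNIV"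
  shows "(a has_sum infsum F UNIV) UNIV" "(b has_sum infsum F UNIV) UNIV"
proof -
  have H: "(F has_sum infsum F UNIV) (Sigma UNIV (\<lambda>_. UNIV))"
    using Fs by (simp add: has_sum_infsum)
  show "(a has_sum infsum F UNIV) UNIV"
    by (rule has_sum_SigmaD[OF H]) (use ha in auto)
  have H2: "((\<lambda>(y, x). F (x, y)) has_sum infsum F UNIV) (Sigma UNIV (\<lambda>_. UNIV))"
    using H has_sum_swap[where f=F and S="infsum F UNIV" and A=UNIV and B=UNIV] by simp
  show "(b has_sum infsum F UNIV) UNIV"
    by (rule has_sum_SigmaD[OF H2]) (use hb in auto)
qed

lemma nonneg_summ_a:
  fixes F :: "'x \<times> 'y \<Rightarrow> real"
  assumes nn: "\<And>p. F p \<ge> 0"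
    and ha: "\<And>x. ((\<lambda>y. F (x, y)) has_sum a x) UNIV"
    and as: "a summable_on UNIV"
  shows "F summable_on UNIV"
  using summable_on_SigmaI[where A=UNIV and B="\<lambda>_. UNIV" and f=F and g=a] ha as nn by auto

lemma nonneg_summ_b:
  fixes F :: "'x \<times> 'y \<Rightarrow> real"
  assumes nn: "\<And>p. F p \<ge> 0"
    and hb: "\<And>y. ((\<lambda>x. F (x, y)) has_sum b y) UNIV"
    and bs: "b summable_on UNIV"
  shows "F summable_on UNIV"
proof -
  have "(\<lambda>(y, x). F (x, y)) summable_on Sigma UNIV (\<lambda>_. UNIV)"
    by (rule summable_on_SigmaI[where g = b]) (use hb bs nn in auto)
  then show ?thesis using summable_on_swap[where f=F and A=UNIV and B=UNIV] by simp
qed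

context rw
begin

lemma chain_law_has_sum:
  assumes t: "t \<ge> 0"
  shows "((\<lambda>n. pois t n * pmf (conv_pow \<mu> n) x) has_sum chain_law \<mu> t x) UNIV"
proof -
  have s: "summable (\<lambda>n. pois t n * pmf (conv_pow \<mu> n) x)"
  proof (rule summable_comparison_test'[where N = 0])
    show "summable (pois t)" by (rule pois_summable)
    show "norm (pois t n * pmf (conv_pow \<mu> n) x) \<le> pois t n" for n
      using pois_nonneg[OF t, of n] pmf_le_1[of "conv_pow \<mu> n" x]
      by (simp add: abs_mult mult_left_le)
  qed
  have "(\<lambda>n. pois t n * pmf (conv_pow \<mu> n) x) sums chain_law \<mu> t x"
    unfolding chain_law_def pois_def using s[unfolded pois_def] by (rule summable_sums)
  then show ?thesis
    by (rule sums_nonneg_imp_has_sum) (simp add: pois_nonneg[OF t])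
qed

lemma E_has_sum:
  "((\<lambda>x. pois t n * pmf (conv_pow \<mu> n) x * g x) has_sum (pois t n * Pn n g 0)) UNIV"
proof (rule has_sum_finite_neutralI[where B = "set_pmf (conv_pow \<mu> n)"])
  show "finite (set_pmf (conv_pow \<mu> n))" by (rule fin_Q)
  show "pois t n * Pn n g 0 = (\<Sum>x\<in>set_pmf (conv_pow \<mu> n). pois t n * pmf (conv_pow \<mu> n) x * g x)"
    by (simp add: Q_sum[symmetric] sum_distrib_left mult.assoc)
qed (auto simp: set_pmf_iff)

lemma link_nonneg:
  assumes t: "t \<ge> 0" and gnn: "\<And>x. g x \<ge> 0"
  shows "(\<lambda>x. chain_law \<mu> t x * g x) summable_on UNIV \<longleftrightarrow> summable (\<lambda>n. pois t n * Pn n g 0)"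
    and "summable (\<lambda>n. pois t n * Pn n g 0) \<Longrightarrow>
           chain_expect \<mu> t g = (\<Sum>n. pois t n * Pn n g 0)"
    and "summable (\<lambda>n. pois t n * Pn n g 0) \<Longrightarrow>
           (\<lambda>p. pois t (snd p) * pmf (conv_pow \<mu> (snd p)) (fst p) * g (fst p)) summable_on UNIV"
proof -
  define F where "F p = pois t (snd p) * pmf (conv_pow \<mu> (snd p)) (fst p) * g (fst p)" for p
  have nn: "F p \<ge> 0" for p unfolding F_def by (simp add: pois_nonneg[OF t] gnn)
  have ha: "((\<lambda>n. F (x, n)) has_sum chain_law \<mu> t x * g x) UNIV" for x
    unfolding F_def using has_sum_cmult_left[OF chain_law_has_sum[OF t], of x "g x"] by simp
  have hb: "((\<lambda>x. F (x, n)) has_sum pois t n * Pn n g 0) UNIV" for n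
    unfolding F_def using E_has_sum[of t n g] by simp
  have bnn: "pois t n * Pn n g 0 \<ge> 0" for n
    using Pn_mono[of "\<lambda>x. 0" g n 0] gnn by (simp add: Pn_const pois_nonneg[OF t])
  have biff: "(\<lambda>n. pois t n * Pn n g 0) summable_on UNIV \<longleftrightarrow> summable (\<lambda>n. pois t n * Pn n g 0)"
    using bnn by (rule summable_on_UNIV_nonneg_real_iff)
  have Fs: "F summable_on UNIV" if "summable (\<lambda>n. pois t n * Pn n g 0)"
    using nonneg_summ_b[OF nn hb] that biff by simp
  show "(\<lambda>x. chain_law \<mu> t x * g x) summable_on UNIV \<longleftrightarrow> summable (\<lambda>n. pois t n * Pn n g 0)"
  proof
    assume "(\<lambda>x. chain_law \<mu> t x * g x) summable_on UNIV"
    then have "F summable_on UNIV" by (rule nonneg_summ_a[OF nn ha])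
    then show "summable (\<lambda>n. pois t n * Pn n g 0)"
      using swap_has_sum(2)[OF _ ha hb] has_sum_imp_summable biff by blast
  next
    assume "summable (\<lambda>n. pois t n * Pn n g 0)"
    then show "(\<lambda>x. chain_law \<mu> t x * g x) summable_on UNIV"
      using swap_has_sum(1)[OF Fs ha hb] has_sum_imp_summable by blast
  qed
  show "chain_expect \<mu> t g = (\<Sum>n. pois t n * Pn n g 0)"
    if "summable (\<lambda>n. pois t n * Pn n g 0)"
  proof -
    have 1: "infsum (\<lambda>x. chain_law \<mu> t x * g x) UNIV = infsum F UNIV"
      using swap_has_sum(1)[OF Fs[OF that] ha hb] by (rule infsumI)
    have 2: "(\<Sum>n. pois t n * Pn n g 0) = infsum F UNIV"
      using has_sum_imp_sums[OF swap_has_sum(2)[OF Fs[OF that] ha hb]] by (rule sums_unique[symmetric])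
    show ?thesis unfolding chain_expect_def 1 2 ..
  qed
  show "(\<lambda>p. pois t (snd p) * pmf (conv_pow \<mu> (snd p)) (fst p) * g (fst p)) summable_on UNIV"
    if "summable (\<lambda>n. pois t n * Pn n g 0)"
    using Fs[OF that] unfolding F_def .
qed

lemma link_signed:
  assumes t: "t \<ge> 0" and s2: "summable (\<lambda>n. pois t n * Pn n (\<lambda>x. (f x)\<^sup>2) 0)"
  shows "chain_expect \<mu> t f = (\<Sum>n. pois t n * Pn n f 0)"
proof -
  define F where "F p = pois t (snd p) * pmf (conv_pow \<mu> (snd p)) (fst p) * f (fst p)" for p
  have absle: "\<bar>x\<bar> \<le> 1 + x\<^sup>2" for x :: real
  proof (cases "\<bar>x\<bar> \<le> 1")
    case True then show ?thesis by (simp add: add_increasing2)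
  next
    case False
    then have "\<bar>x\<bar> * 1 \<le> \<bar>x\<bar> * \<bar>x\<bar>" by (intro mult_left_mono) auto
    then show ?thesis by (simp add: power2_eq_square abs_mult_self_eq)
  qed
  have s1: "summable (\<lambda>n. pois t n * Pn n (\<lambda>x. 1 + (f x)\<^sup>2) 0)"
  proof -
    have "(\<lambda>n. pois t n * Pn n (\<lambda>x. 1 + (f x)\<^sup>2) 0) = (\<lambda>n. pois t n + pois t n * Pn n (\<lambda>x. (f x)\<^sup>2) 0)"
      by (rule ext) (simp add: Pn_add Pn_const algebra_simps)
    then show ?thesis using summable_add[OF pois_summable s2] by simp
  qed
  have Gs: "(\<lambda>p. pois t (snd p) * pmf (conv_pow \<mu> (snd p)) (fst p) * (1 + (f (fst p))\<^sup>2)) summable_on UNIV"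
    by (rule link_nonneg(3)[OF t _ s1]) (simp add: add_nonneg_nonneg)
  have Fs: "F summable_on UNIV"
  proof -
    have "(\<lambda>p. norm (F p)) summable_on UNIV"
    proof (rule Infinite_Sum.abs_summable_on_comparison_test'[OF Gs])
      show "norm (F p) \<le> pois t (snd p) * pmf (conv_pow \<mu> (snd p)) (fst p) * (1 + (f (fst p))\<^sup>2)" for p
        unfolding F_def using absle[of "f (fst p)"] pois_nonneg[OF t, of "snd p"]
        by (simp add: abs_mult mult_left_mono)
    qed
    then show ?thesis using summable_on_iff_abs_summable_on_real by blast
  qed
  have ha: "((\<lambda>n. F (x, n)) has_sum chain_law \<mu> t x * f x) UNIV" for x
    unfolding F_def using has_sum_cmult_left[OF chain_law_has_sum[OF t], of x "f x"] by simp
  have hb: "((\<lambda>x. F (x, n)) has_sum pois t n * Pn n f 0) UNIV" for n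
    unfolding F_def using E_has_sum[of t n f] by simp
  have 1: "infsum (\<lambda>x. chain_law \<mu> t x * f x) UNIV = infsum F UNIV"
    using swap_has_sum(1)[OF Fs ha hb] by (rule infsumI)
  have 2: "(\<Sum>n. pois t n * Pn n f 0) = infsum F UNIV"
    using has_sum_imp_sums[OF swap_has_sum(2)[OF Fs ha hb]] by (rule sums_unique[symmetric])
  show ?thesis unfolding chain_expect_def 1 2 ..
qed

end


theorem corollary3:
  fixes \<mu> :: "'a::group_add pmf" and f :: "'a \<Rightarrow> real" and t :: real
  assumes fin: "finite (set_pmf \<mu>)"
    and A1: "\<And>x z. pmf \<mu> (x + z + - x) = pmf \<mu> z"
    and A2: "\<And>z. pmf \<mu> (- z) = pmf \<mu> z"
    and t: "t \<ge> 0"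
    and finGamma: "(\<lambda>x. chain_law \<mu> t x * carre_du_champ \<mu> f x) summable_on UNIV"
  shows "(\<lambda>x. chain_law \<mu> t x * (f x)\<^sup>2) summable_on UNIV
    \<and> chain_var \<mu> t f \<le> 2 * t * chain_expect \<mu> t (carre_du_champ \<mu> f)"
proof -
  interpret rw \<mu> using fin A1 by unfold_locales
  define p where "p = pois t"
  define h where "h n = Pn n f 0" for n
  define e2 where "e2 n = Pn n (\<lambda>x. (f x)\<^sup>2) 0" for n
  define g where "g n = Pn n (carre_du_champ \<mu> f) 0" for n
  define d where "d n = h (Suc n) - h n" for n
  have pn: "p n \<ge> 0" for n unfolding p_def by (rule pois_nonneg[OF t])
  have gnn: "g n \<ge> 0" for n
    using Pn_mono[of "\<lambda>x. 0" "carre_du_champ \<mu> f" n 0] Gam_nonneg[of f]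
    by (simp add: g_def Pn_const)
  have sg: "summable (\<lambda>n. p n * g n)"
    using link_nonneg(1)[OF t Gam_nonneg[of f]] finGamma by (simp add: p_def g_def)
  have Eg: "chain_expect \<mu> t (carre_du_champ \<mu> f) = (\<Sum>n. p n * g n)"
    using link_nonneg(2)[OF t Gam_nonneg[of f]] sg by (simp add: p_def g_def)
  have st1: "e2 (Suc n) + real (Suc n) * (d n)\<^sup>2 \<le> (h (Suc n))\<^sup>2 + 2 * real (Suc n) * g n" for n
    unfolding e2_def h_def g_def d_def by (rule step1)
  have jen: "(h n)\<^sup>2 \<le> e2 n" for n unfolding h_def e2_def by (rule Pn_jensen)
  have dle: "(d n)\<^sup>2 \<le> 2 * g n" for n
  proof -
    have "real (Suc n) * (d n)\<^sup>2 \<le> real (Suc n) * (2 * g n)"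
      using st1[of n] jen[of "Suc n"] by (simp add: algebra_simps)
    then show ?thesis by simp
  qed
  have sd: "summable (\<lambda>k. p k * (d k)\<^sup>2)"
  proof (rule summable_comparison_test'[where N = 0])
    show "summable (\<lambda>k. 2 * (p k * g k))" by (intro summable_mult sg)
    show "norm (p n * (d n)\<^sup>2) \<le> 2 * (p n * g n)" for n
      using mult_left_mono[OF dle[of n] pn[of n]] pn[of n] by (simp add: abs_mult algebra_simps)
  qed
  have sd': "summable (\<lambda>k. pois t k * (h (Suc k) - h k)\<^sup>2)" using sd by (simp add: p_def d_def)
  note PC = poincare[OF t sd']
  have sh2: "summable (\<lambda>k. p k * (h k)\<^sup>2)" using PC(1) by (simp add: p_def)
  have sh1: "summable (\<lambda>k. p k * h k)" using PC(2) by (simp add: p_def)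
  have PI: "(\<Sum>k. p k * (h k)\<^sup>2) - (\<Sum>k. p k * h k)\<^sup>2 \<le> t * (\<Sum>k. p k * (d k)\<^sup>2)"
    using PC(3) by (simp add: p_def d_def)
  have key: "p (Suc n) * e2 (Suc n) \<le> p (Suc n) * (h (Suc n))\<^sup>2 + 2 * t * (p n * g n) - t * (p n * (d n)\<^sup>2)" for n
  proof -
    have "p (Suc n) * (e2 (Suc n) + real (Suc n) * (d n)\<^sup>2) \<le> p (Suc n) * ((h (Suc n))\<^sup>2 + 2 * real (Suc n) * g n)"
      by (rule mult_left_mono[OF st1 pn])
    then have A: "p (Suc n) * e2 (Suc n) + (real (Suc n) * p (Suc n)) * (d n)\<^sup>2
        \<le> p (Suc n) * (h (Suc n))\<^sup>2 + 2 * (real (Suc n) * p (Suc n)) * g n"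
      by (simp add: algebra_simps)
    have Q: "real (Suc n) * p (Suc n) = t * p n" unfolding p_def by (rule pois_Suc)
    from A[unfolded Q] show ?thesis by (simp add: algebra_simps)
  qed
  have e2nn: "e2 n \<ge> 0" for n using jen[of n] zero_le_power2[of "h n"] by linarith
  have sh2s: "summable (\<lambda>n. p (Suc n) * (h (Suc n))\<^sup>2)"
    using sh2 by (subst summable_Suc_iff)
  have sR: "summable (\<lambda>n. p (Suc n) * (h (Suc n))\<^sup>2 + 2 * t * (p n * g n) - t * (p n * (d n)\<^sup>2))"
    by (intro summable_diff summable_add sh2s summable_mult sg sd)
  have se2s: "summable (\<lambda>n. p (Suc n) * e2 (Suc n))"
  proof (rule summable_comparison_test'[where N = 0])
    show "summable (\<lambda>n. p (Suc n) * (h (Suc n))\<^sup>2 + 2 * t * (p n * g n) - t * (p n * (d n)\<^sup>2))" by (rule sR)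
    show "norm (p (Suc n) * e2 (Suc n)) \<le> p (Suc n) * (h (Suc n))\<^sup>2 + 2 * t * (p n * g n) - t * (p n * (d n)\<^sup>2)" for n
      using key[of n] pn[of "Suc n"] e2nn[of "Suc n"] by (simp add: abs_mult)
  qed
  have se2: "summable (\<lambda>n. p n * e2 n)" using se2s by (subst (asm) summable_Suc_iff)
  have "(\<Sum>n. p (Suc n) * e2 (Suc n)) \<le> (\<Sum>n. p (Suc n) * (h (Suc n))\<^sup>2 + 2 * t * (p n * g n) - t * (p n * (d n)\<^sup>2))"
    by (rule suminf_le[OF key se2s sR])
  also have "\<dots> = (\<Sum>n. p (Suc n) * (h (Suc n))\<^sup>2) + 2 * t * (\<Sum>n. p n * g n) - t * (\<Sum>n. p n * (d n)\<^sup>2)"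
  proof -
    have "(\<lambda>n. p (Suc n) * (h (Suc n))\<^sup>2 + 2 * t * (p n * g n) - t * (p n * (d n)\<^sup>2)) sums
        ((\<Sum>n. p (Suc n) * (h (Suc n))\<^sup>2) + 2 * t * (\<Sum>n. p n * g n) - t * (\<Sum>n. p n * (d n)\<^sup>2))"
      by (intro sums_diff sums_add sums_mult summable_sums sh2s sg sd)
    then show ?thesis by (rule sums_unique[symmetric])
  qed
  finally have E2le: "(\<Sum>n. p n * e2 n) \<le> (\<Sum>n. p n * (h n)\<^sup>2) + 2 * t * (\<Sum>n. p n * g n) - t * (\<Sum>n. p n * (d n)\<^sup>2)"
    using suminf_split_head[OF se2] suminf_split_head[OF sh2] by (simp add: e2_def h_def)
  have L2: "(\<lambda>x. chain_law \<mu> t x * (f x)\<^sup>2) summable_on UNIV"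
    using link_nonneg(1)[of t "\<lambda>x. (f x)\<^sup>2"] t se2 by (simp add: p_def e2_def)
  have E2: "chain_expect \<mu> t (\<lambda>x. (f x)\<^sup>2) = (\<Sum>n. p n * e2 n)"
    using link_nonneg(2)[of t "\<lambda>x. (f x)\<^sup>2"] t se2 by (simp add: p_def e2_def)
  have E1: "chain_expect \<mu> t f = (\<Sum>n. p n * h n)"
    using link_signed[OF t] se2 by (simp add: p_def e2_def h_def)
  have "chain_var \<mu> t f \<le> 2 * t * chain_expect \<mu> t (carre_du_champ \<mu> f)"
    unfolding chain_var_def E2 E1 Eg using E2le PI by linarith
  with L2 show ?thesis by blast
qed


end
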